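(* Let $\mathcal{A}$ be a complex unital structurable algebra of type $(1,2)$. Then $\mathcal{A}$ is isomorphic (as an algebra with involution) to the universal unital algebra ${\rm S}_1$ of type $(1,2)$, or to the algebra ${\rm S}_2$ with basis $\{e_1,e_2,e_3\}$, unit $e_1$, involution $\overline{e_1}=e_1$, $\overline{e_2}=-e_2$, $\overline{e_3}=-e_3$, and multiplication (besides $e_1e_i=e_ie_1=e_i$; all unlisted products of basis elements zero) $e_2e_3=e_2$, $e_3e_2=-e_2$, $e_3e_3=e_1$.
   Context: An involution on an algebra $\mathcal{A}$ is a linear map $x\mapsto\overline{x}$ with $\overline{\overline{x}}=x$ and $\overline{xy}=\overline{y}\,\overline{x}$. For a unital algebra with involution write $\mathcal{A}=\mathcal{H}\oplus\mathcal{S}$ with $\mathcal{H}=\{a:\overline a=a\}$, $\mathcal{S}=\{a:\overline a=-a\}$; $\mathcal{A}$ is of type $(k,n-k)$ if $\dim\mathcal{A}=n$ and $\dim\mathcal{H}=k$. For $x,y\in\mathcal{A}$ define $V_{x,y}(z)=(x\overline{y})z+(z\overline{y})x-(z\overline{x})y$ and $T_x(z)=xz+zx-z\overline{x}$. A unital algebra with involution is structurable if $T_zV_{x,y}-V_{x,y}T_z=V_{T_z(x),y}-V_{x,T_{\overline z}(y)}$ for all $x,y,z$. An isomorphism of algebras with involution is a linear bijection $\varphi$ with $\varphi(xy)=\varphi(x)\varphi(y)$ and $\varphi(\overline x)=\overline{\varphi(x)}$. The universal unital algebra of type $(1,2)$ is the $3$-dimensional algebra with basis $e_1,e_2,e_3$,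 whose only nonzero products of basis elements are $e_1e_i=e_ie_1=e_i$, with involution $\overline{e_1}=e_1$, $\overline{e_2}=-e_2$, $\overline{e_3}=-e_3$. *)

theory Defs
  imports "HOL-Analysis.Analysis"
begin

definition complex_algebra :: "(complex \<Rightarrow> 'a::ab_group_add \<Rightarrow> 'a) \<Rightarrow> ('a \<Rightarrow> 'a \<Rightarrow> 'a) \<Rightarrow> bool" where
  "complex_algebra sc m \<longleftrightarrow> vector_space sc \<and>
     (\<forall>x. Vector_Spaces.linear sc sc (m x)) \<and> (\<forall>y. Vector_Spaces.linear sc sc (\<lambda>x. m x y))"

definition is_involution :: "(complex \<Rightarrow> 'a::ab_group_add \<Rightarrow> 'a) \<Rightarrow> ('a \<Rightarrow> 'a \<Rightarrow> 'a) \<Rightarrow> ('a \<Rightarrow> 'a) \<Rightarrow> bool" where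
  "is_involution sc m iv \<longleftrightarrow> Vector_Spaces.linear sc sc iv \<and>
     (\<forall>x. iv (iv x) = x) \<and> (\<forall>x y. iv (m x y) = m (iv y) (iv x))"

definition is_unital :: "('a \<Rightarrow> 'a \<Rightarrow> 'a) \<Rightarrow> bool" where
  "is_unital m \<longleftrightarrow> (\<exists>e. \<forall>x. m e x = x \<and> m x e = x)"

text \<open>Type (k, n-k): dim A = n and dim H = k, H the hermitian (symmetric) elements.\<close>
definition of_type :: "(complex \<Rightarrow> 'a::ab_group_add \<Rightarrow> 'a) \<Rightarrow> ('a \<Rightarrow> 'a) \<Rightarrow> nat \<Rightarrow> nat \<Rightarrow> bool" where
  "of_type sc iv k l \<longleftrightarrow> vector_space.dim sc (UNIV :: 'a set) = k + l \<and>
     vector_space.dim sc {a. iv a = a} = k"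

definition Vop :: "('a::ab_group_add \<Rightarrow> 'a \<Rightarrow> 'a) \<Rightarrow> ('a \<Rightarrow> 'a) \<Rightarrow> 'a \<Rightarrow> 'a \<Rightarrow> 'a \<Rightarrow> 'a" where
  "Vop m iv x y z = m (m x (iv y)) z + m (m z (iv y)) x - m (m z (iv x)) y"

definition Top :: "('a::ab_group_add \<Rightarrow> 'a \<Rightarrow> 'a) \<Rightarrow> ('a \<Rightarrow> 'a) \<Rightarrow> 'a \<Rightarrow> 'a \<Rightarrow> 'a" where
  "Top m iv x z = m x z + m z x - m z (iv x)"

definition structurable :: "(complex \<Rightarrow> 'a::ab_group_add \<Rightarrow> 'a) \<Rightarrow> ('a \<Rightarrow> 'a \<Rightarrow> 'a) \<Rightarrow> ('a \<Rightarrow> 'a) \<Rightarrow> bool" where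
  "structurable sc m iv \<longleftrightarrow> complex_algebra sc m \<and> is_involution sc m iv \<and> is_unital m \<and>
     (\<forall>x y z w. Top m iv z (Vop m iv x y w) - Vop m iv x y (Top m iv z w)
        = Vop m iv (Top m iv z x) y w - Vop m iv x (Top m iv (iv z) y) w)"

text \<open>The concrete 3-dimensional algebras on complex triples (coordinates w.r.t. e1, e2, e3).\<close>

definition sc3 :: "complex \<Rightarrow> complex \<times> complex \<times> complex \<Rightarrow> complex \<times> complex \<times> complex" where
  "sc3 c v = (case v of (a1, a2, a3) \<Rightarrow> (c * a1, c * a2, c * a3))"

definition invS :: "complex \<times> complex \<times> complex \<Rightarrow> complex \<times> complex \<times> complex" where
  "invS v = (case v of (a1, a2, a3) \<Rightarrow> (a1, - a2, - a3))"

text \<open>S1: only nonzero basis products e1 ei = ei e1 = ei.\<close>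
definition multS1 :: "complex \<times> complex \<times> complex \<Rightarrow> complex \<times> complex \<times> complex \<Rightarrow> complex \<times> complex \<times> complex" where
  "multS1 u v = (case u of (a1, a2, a3) \<Rightarrow> case v of (b1, b2, b3) \<Rightarrow>
      (a1 * b1, a1 * b2 + a2 * b1, a1 * b3 + a3 * b1))"

text \<open>S2: additionally e2 e3 = e2, e3 e2 = - e2, e3 e3 = e1.\<close>
definition multS2 :: "complex \<times> complex \<times> complex \<Rightarrow> complex \<times> complex \<times> complex \<Rightarrow> complex \<times> complex \<times> complex" where
  "multS2 u v = (case u of (a1, a2, a3) \<Rightarrow> case v of (b1, b2, b3) \<Rightarrow>
      (a1 * b1 + a3 * b3, a1 * b2 + a2 * b1 + a2 * b3 - a3 * b2, a1 * b3 + a3 * b1))"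

definition iso_inv_alg ::
  "(complex \<Rightarrow> 'a::ab_group_add \<Rightarrow> 'a) \<Rightarrow> ('a \<Rightarrow> 'a \<Rightarrow> 'a) \<Rightarrow> ('a \<Rightarrow> 'a) \<Rightarrow>
   (complex \<Rightarrow> 'b::ab_group_add \<Rightarrow> 'b) \<Rightarrow> ('b \<Rightarrow> 'b \<Rightarrow> 'b) \<Rightarrow> ('b \<Rightarrow> 'b) \<Rightarrow> ('a \<Rightarrow> 'b) \<Rightarrow> bool" where
  "iso_inv_alg sc m iv sc' m' iv' \<phi> \<longleftrightarrow> Vector_Spaces.linear sc sc' \<phi> \<and> bij \<phi> \<and>
     (\<forall>x y. \<phi> (m x y) = m' (\<phi> x) (\<phi> y)) \<and> (\<forall>x. \<phi> (iv x) = iv' (\<phi> x))"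

end

theory Submission
  imports Defs
begin

definition multG :: "complex \<Rightarrow> complex \<Rightarrow> complex \<Rightarrow> complex \<Rightarrow> complex \<Rightarrow>
   complex \<times> complex \<times> complex \<Rightarrow> complex \<times> complex \<times> complex \<Rightarrow> complex \<times> complex \<times> complex" where
  "multG a b c p q u w = (case u of (u1, u2, u3) \<Rightarrow> case w of (w1, w2, w3) \<Rightarrow>
     (u1 * w1 + a * u2 * w2 + c * u3 * w3 + b * (u2 * w3 + u3 * w2),
      u1 * w2 + u2 * w1 + p * (u2 * w3 - u3 * w2),
      u1 * w3 + u3 * w1 + q * (u2 * w3 - u3 * w2)))"

lemma vs3: "vector_space sc3"
  unfolding vector_space_def sc3_def by (auto simp: algebra_simps)

lemma lemD:
  assumes "\<forall>x y z w. Top (multG a b c p q) invS z (Vop (multG a b c p q) invS x y w)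
      - Vop (multG a b c p q) invS x y (Top (multG a b c p q) invS z w)
    = Vop (multG a b c p q) invS (Top (multG a b c p q) invS z x) y w
      - Vop (multG a b c p q) invS x (Top (multG a b c p q) invS (invS z) y) w"
  shows "a = q^2 \<and> c = p^2 \<and> b = - p * q"
proof -
  have 1: "Top (multG a b c p q) invS z (Vop (multG a b c p q) invS x y w)
      - Vop (multG a b c p q) invS x y (Top (multG a b c p q) invS z w)
    = Vop (multG a b c p q) invS (Top (multG a b c p q) invS z x) y w
      - Vop (multG a b c p q) invS x (Top (multG a b c p q) invS (invS z) y) w" for x y z w
    using assms by blast
  note A = 1[where x="(1,0,0)" and y="(0,1,0)" and z="(0,0,1)" and w="(0,1,0)"]
  note B = 1[where x="(1,0,0)" and y="(0,1,0)" and z="(0,0,1)" and w="(0,0,1)"]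
  from A B have "6 * b + 6 * p * q = 0 \<and> 6 * q * q - 6 * a = 0 \<and> 6 * c - 6 * p * p = 0"
    by (simp add: Top_def Vop_def multG_def invS_def zero_prod_def algebra_simps)
  then have h: "6 * (b + p * q) = 0" "a = q * q" "c = p * p" by (simp_all add: algebra_simps)
  from h(1) have "b + p * q = 0" by (simp only: mult_eq_0_iff) simp
  then have "b = - (p * q)" by (simp add: eq_neg_iff_add_eq_0)
  with h(2,3) show ?thesis by (simp add: power2_eq_square)
qed

lemma lin3I:
  assumes "\<And>x y. f (x + y) = f x + f y" "\<And>c x. f (sc3 c x) = sc3 c (f x)"
  shows "Vector_Spaces.linear sc3 sc3 f"
  unfolding Vector_Spaces.linear_iff using assms vs3 by blast

lemma iso_comp:
  assumes "iso_inv_alg sc m iv sc3 M1 invS \<phi>" "iso_inv_alg sc3 M1 invS sc3 M2 invS g"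
  shows "iso_inv_alg sc m iv sc3 M2 invS (g \<circ> \<phi>)"
  using assms unfolding iso_inv_alg_def comp_def[symmetric]
  by (intro conjI allI; (elim conjE)?) (auto intro: Vector_Spaces.linear_compose bij_comp simp del: split_paired_All)

lemma multS1_eq: "multS1 = multG 0 0 0 0 0"
  by (auto simp: fun_eq_iff multS1_def multG_def)

lemma lemE1: "iso_inv_alg sc3 (multG 0 0 0 0 0) invS sc3 multS1 invS id"
  unfolding iso_inv_alg_def multS1_eq
  by (auto simp: vector_space.linear_id[OF vs3])

lemma lemE2:
  assumes "p * \<beta> - q * \<alpha> = 1"
  shows "iso_inv_alg sc3 (multG (q^2) (-p*q) (p^2) p q) invS sc3 multS2 invS
     (\<lambda>(x1,x2,x3). (x1, \<beta>*x2 - \<alpha>*x3, -q*x2 + p*x3))"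
  unfolding iso_inv_alg_def
proof (intro conjI allI)
  show "Vector_Spaces.linear sc3 sc3 (\<lambda>(x1,x2,x3). (x1, \<beta>*x2 - \<alpha>*x3, -q*x2 + p*x3))"
    by (rule lin3I) (auto simp: sc3_def algebra_simps)
  show "bij (\<lambda>(x1,x2,x3). (x1, \<beta>*x2 - \<alpha>*x3, -q*x2 + p*x3))"
  proof (rule o_bij[where g = "\<lambda>(y1,y2,y3). (y1, p*y2 + \<alpha>*y3, q*y2 + \<beta>*y3)"])
    show "(\<lambda>(x1,x2,x3). (x1, \<beta>*x2 - \<alpha>*x3, -q*x2 + p*x3)) \<circ> (\<lambda>(y1,y2,y3). (y1, p*y2 + \<alpha>*y3, q*y2 + \<beta>*y3)) = id"
      using assms by (auto simp: fun_eq_iff) algebra+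
    show "(\<lambda>(y1,y2,y3). (y1, p*y2 + \<alpha>*y3, q*y2 + \<beta>*y3)) \<circ> (\<lambda>(x1,x2,x3). (x1, \<beta>*x2 - \<alpha>*x3, -q*x2 + p*x3)) = id"
      using assms by (auto simp: fun_eq_iff) algebra+
  qed
  fix x y :: "complex \<times> complex \<times> complex"
  obtain x1 x2 x3 y1 y2 y3 where xy: "x = (x1,x2,x3)" "y = (y1,y2,y3)" by (cases x, cases y) auto
  show "(case multG (q\<^sup>2) (- p * q) (p\<^sup>2) p q x y of (x1, x2, x3) \<Rightarrow> (x1, \<beta> * x2 - \<alpha> * x3, - q * x2 + p * x3)) =
       multS2 (case x of (x1, x2, x3) \<Rightarrow> (x1, \<beta> * x2 - \<alpha> * x3, - q * x2 + p * x3))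
        (case y of (x1, x2, x3) \<Rightarrow> (x1, \<beta> * x2 - \<alpha> * x3, - q * x2 + p * x3))"
    unfolding xy by (simp add: multG_def multS2_def) (simp add: algebra_simps power2_eq_square)
  show "(case invS x of (x1, x2, x3) \<Rightarrow> (x1, \<beta> * x2 - \<alpha> * x3, - q * x2 + p * x3)) =
       invS (case x of (x1, x2, x3) \<Rightarrow> (x1, \<beta> * x2 - \<alpha> * x3, - q * x2 + p * x3))"
    unfolding xy by (simp add: invS_def)
qed


lemma addhom:
  fixes f :: "'a::ab_group_add \<Rightarrow> 'b::ab_group_add"
  assumes "\<And>x y. f (x + y) = f x + f y"
  shows "f 0 = 0" "f (- x) = - f x" "f (x - y) = f x - f y"
proof -
  have "f 0 + f 0 = f 0 + 0" using assms[of 0 0] by simp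
  then show z: "f 0 = 0" by (rule add_left_imp_eq)
  have neg: "f (- u) = - f u" for u
  proof -
    have "f u + f (- u) = 0" using assms[of u "- u"] z by simp
    then show ?thesis by (simp add: eq_neg_iff_add_eq_0 add.commute)
  qed
  then show "f (- x) = - f x" by simp
  show "f (x - y) = f x - f y" using assms[of x "- y"] neg[of y] by simp
qed

lemma transport:
  assumes iso: "iso_inv_alg sc m iv sc3 M invS \<phi>"
    and idm: "\<forall>x y z w. Top m iv z (Vop m iv x y w) - Vop m iv x y (Top m iv z w)
        = Vop m iv (Top m iv z x) y w - Vop m iv x (Top m iv (iv z) y) w"
  shows "\<forall>x y z w. Top M invS z (Vop M invS x y w) - Vop M invS x y (Top M invS z w)
        = Vop M invS (Top M invS z x) y w - Vop M invS x (Top M invS (invS z) y) w"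
proof (intro allI)
  fix X Y Z W :: "complex \<times> complex \<times> complex"
  have lin: "Vector_Spaces.linear sc sc3 \<phi>" and bj: "bij \<phi>"
    and hm: "\<And>x y. \<phi> (m x y) = M (\<phi> x) (\<phi> y)" and hi: "\<And>x. \<phi> (iv x) = invS (\<phi> x)"
    using iso unfolding iso_inv_alg_def by auto
  have ad: "\<And>x y. \<phi> (x + y) = \<phi> x + \<phi> y" using lin unfolding Vector_Spaces.linear_iff by blast
  note adm = addhom[of \<phi>, OF ad]
  have T: "\<phi> (Top m iv z w) = Top M invS (\<phi> z) (\<phi> w)" for z w
    by (simp add: Top_def ad adm hm hi)
  have Vv: "\<phi> (Vop m iv x y z) = Vop M invS (\<phi> x) (\<phi> y) (\<phi> z)" for x y z
    by (simp add: Vop_def ad adm hm hi)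
  obtain x y z w where "X = \<phi> x" "Y = \<phi> y" "Z = \<phi> z" "W = \<phi> w"
    using bj by (metis bij_pointE)
  moreover have "\<phi> (Top m iv z (Vop m iv x y w) - Vop m iv x y (Top m iv z w))
        = \<phi> (Vop m iv (Top m iv z x) y w - Vop m iv x (Top m iv (iv z) y) w)"
    using idm by simp
  ultimately show "Top M invS Z (Vop M invS X Y W) - Vop M invS X Y (Top M invS Z W)
        = Vop M invS (Top M invS Z X) Y W - Vop M invS X (Top M invS (invS Z) Y) W"
    by (simp add: adm T Vv hi)
qed


lemma (in vector_space) coef0:
  assumes sp: "UNIV \<subseteq> span {u, v, w}" and d: "dim (UNIV :: 'b set) = 3"
    and eq: "scale a u + scale b v + scale c w = 0"
  shows "a = 0"
proof (rule ccontr)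
  assume a: "a \<noteq> 0"
  have "scale a u = - (scale b v + scale c w)" using eq
    by (simp only: eq_neg_iff_add_eq_0 add.assoc)
  then have "scale (inverse a) (scale a u) = scale (inverse a) (- (scale b v + scale c w))" by simp
  then have "u = scale (inverse a) (- (scale b v + scale c w))" using a by simp
  then have "u \<in> span {v, w}"
    by (metis span_scale span_neg span_add span_base insertI1 insertI2 singletonI)
  then have "{u, v, w} \<subseteq> span {v, w}" by (auto intro: span_base)
  then have "span {u, v, w} \<subseteq> span {v, w}" by (rule span_minimal) simp
  then have "dim (UNIV :: 'b set) \<le> card {v, w}" using sp
    by (intro dim_le_card) auto
  also have "\<dots> \<le> 2" by (simp add: card_insert_le_m1)
  finally show False using d by simp
qed


lemma lemA:
  fixes sc :: "complex \<Rightarrow> 'a::ab_group_add \<Rightarrow> 'a"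
  assumes ca: "complex_algebra sc m" and inv: "is_involution sc m iv" and un: "is_unital m"
    and ty: "of_type sc iv 1 2"
  shows "\<exists>a b c p q \<phi>. iso_inv_alg sc m iv sc3 (multG a b c p q) invS \<phi>"
proof -
  interpret V: vector_space sc using ca unfolding complex_algebra_def by auto
  have l1: "Vector_Spaces.linear sc sc (m x)" for x using ca unfolding complex_algebra_def by auto
  have l2: "Vector_Spaces.linear sc sc (\<lambda>x. m x y)" for y using ca unfolding complex_algebra_def by auto
  have li: "Vector_Spaces.linear sc sc iv" and ivv: "\<And>x. iv (iv x) = x"
    and ivm: "\<And>x y. iv (m x y) = m (iv y) (iv x)"
    using inv unfolding is_involution_def by auto
  have madd2: "m x (y + z) = m x y + m x z" for x y z using l1[of x] unfolding Vector_Spaces.linear_iff by blast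
  have mscale2: "m x (sc k y) = sc k (m x y)" for x k y using l1[of x] unfolding Vector_Spaces.linear_iff by blast
  have madd1: "m (x + y) z = m x z + m y z" for x y z using l2[of z] unfolding Vector_Spaces.linear_iff by blast
  have mscale1: "m (sc k x) y = sc k (m x y)" for x k y using l2[of y] unfolding Vector_Spaces.linear_iff by blast
  have ivadd: "iv (x + y) = iv x + iv y" for x y using li unfolding Vector_Spaces.linear_iff by blast
  have ivscale: "iv (sc k x) = sc k (iv x)" for k x using li unfolding Vector_Spaces.linear_iff by blast
  note ivadd' = addhom[of iv, OF ivadd]
  have mneg1: "m (- x) y = - m x y" for x y using addhom(2)[of "\<lambda>x. m x y", OF madd1] by simp
  have mneg2: "m x (- y) = - m x y" for x y using addhom(2)[of "m x", OF madd2] by simp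
  have m01: "m 0 y = 0" for y using addhom(1)[of "\<lambda>x. m x y", OF madd1] by simp
  have dU: "V.dim (UNIV :: 'a set) = 3" and dH: "V.dim {a. iv a = a} = 1"
    using ty unfolding of_type_def by auto
  obtain e where e: "\<And>x. m e x = x" "\<And>x. m x e = x" using un unfolding is_unital_def by auto
  have ive: "iv e = e"
  proof -
    have "m (iv e) x = x" for x
    proof -
      have "m (iv e) x = iv (iv (m (iv e) x))" by (simp add: ivv)
      also have "\<dots> = iv (m (iv x) e)" by (simp add: ivm ivv)
      also have "\<dots> = x" by (simp add: e ivv)
      finally show ?thesis .
    qed
    then have "m (iv e) e = e" by simp
    moreover have "m (iv e) e = iv e" by (simp add: e)
    ultimately show ?thesis by simp
  qed
  have e0: "e \<noteq> 0"
  proof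
    assume "e = 0"
    then have "x = 0" for x :: 'a using e(1)[of x] m01 by simp
    then have "(UNIV :: 'a set) \<subseteq> V.span {}" by auto
    then have "V.dim (UNIV :: 'a set) \<le> card ({} :: 'a set)" by (intro V.dim_le_card) auto
    then show False using dU by simp
  qed
  have hsym: "\<exists>k. h = sc k e" if "iv h = h" for h
  proof -
    obtain B where B: "B \<subseteq> {a. iv a = a}" "V.independent B" "{a. iv a = a} \<subseteq> V.span B"
        "card B = V.dim {a. iv a = a}"
      using V.basis_exists by blast
    then obtain b where Bb: "B = {b}" using dH by (auto simp: card_Suc_eq)
    have "e \<in> V.span {b}" using B(3) Bb ive by auto
    then obtain k where k: "e = sc k b" by (auto simp: V.span_singleton)
    have k0: "k \<noteq> 0" using k e0 by auto
    have "h \<in> V.span {b}" using B(3) Bb that by auto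
    then obtain j where j: "h = sc j b" by (auto simp: V.span_singleton)
    have "sc (j / k) e = h" using k k0 j by simp
    then show ?thesis by metis
  qed
  obtain B where B: "{e} \<subseteq> B" "V.independent B" "UNIV \<subseteq> V.span B"
    using V.maximal_independent_subset_extend[of "{e}" UNIV] e0 by auto
  have cB: "card B = 3" using V.basis_card_eq_dim[of B UNIV] B dU by auto
  have "card (B - {e}) = 2" using cB B(1) by (simp add: card_Diff_singleton_if)
  then obtain b2 b3 where b23: "B - {e} = {b2, b3}" by (auto simp: card_2_iff)
  have BB: "B = {e, b2, b3}" using b23 B(1) by auto
  define s where "s = b2 - iv b2"
  define t where "t = b3 - iv b3"
  have ivs: "iv s = - s" unfolding s_def by (simp add: ivadd' ivv)
  have ivt: "iv t = - t" unfolding t_def by (simp add: ivadd' ivv)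
  have inspan: "b \<in> V.span {e, s, t}" if "b = b2 \<or> b = b3" for b
  proof -
    have "iv (b + iv b) = b + iv b" by (simp add: ivadd ivv add.commute)
    then obtain k where k: "b + iv b = sc k e" using hsym by blast
    have bb: "b + b = sc 2 b"
      by (metis V.scale_one V.scale_left_distrib one_add_one)
    have "b = sc (1/2) (b - iv b) + sc (1/2) (b + iv b)"
      by (simp flip: V.scale_right_distrib add: bb)
    moreover have "b - iv b \<in> V.span {e, s, t}"
      using that unfolding s_def t_def by (auto intro: V.span_base)
    moreover have "b + iv b \<in> V.span {e, s, t}"
      unfolding k by (auto intro: V.span_base V.span_scale)
    ultimately show ?thesis by (metis V.span_add V.span_scale)
  qed
  have sp: "UNIV \<subseteq> V.span {e, s, t}"
  proof -
    have "B \<subseteq> V.span {e, s, t}" unfolding BB using inspan by (auto intro: V.span_base)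
    then have "V.span B \<subseteq> V.span {e, s, t}" by (rule V.span_minimal) simp
    then show ?thesis using B(3) by auto
  qed
  define psi where "psi = (\<lambda>(x1::complex, x2::complex, x3::complex). sc x1 e + sc x2 s + sc x3 t)"
  have psi_simp: "psi (x1, x2, x3) = sc x1 e + sc x2 s + sc x3 t" for x1 x2 x3
    unfolding psi_def by simp
  have psi_add: "psi (u + w) = psi u + psi w" for u w
    by (cases u, cases w) (simp add: psi_simp V.scale_left_distrib algebra_simps)
  have psi_scale: "psi (sc3 k u) = sc k (psi u)" for k u
    by (cases u) (simp add: psi_simp sc3_def V.scale_right_distrib)
  note psi_add' = addhom[of psi, OF psi_add]
  have z3: "x1 = 0 \<and> x2 = 0 \<and> x3 = 0" if "psi (x1, x2, x3) = 0" for x1 x2 x3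
  proof -
    have h: "sc x1 e + sc x2 s + sc x3 t = 0" using that by (simp add: psi_simp)
    have "x1 = 0" using V.coef0[OF sp dU h] .
    moreover have "x2 = 0"
    proof -
      have "sc x2 s + sc x1 e + sc x3 t = 0" using h by (simp add: algebra_simps)
      moreover have "UNIV \<subseteq> V.span {s, e, t}" using sp by (simp add: insert_commute)
      ultimately show ?thesis using V.coef0 dU by blast
    qed
    moreover have "x3 = 0"
    proof -
      have "sc x3 t + sc x1 e + sc x2 s = 0" using h by (simp add: algebra_simps)
      moreover have "UNIV \<subseteq> V.span {t, e, s}" using sp by (simp add: insert_commute)
      ultimately show ?thesis using V.coef0 dU by blast
    qed
    ultimately show ?thesis by simp
  qed
  have inj_psi: "inj psi"
  proof (rule injI)
    fix u w assume "psi u = psi w"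
    then have "psi (u - w) = 0" by (simp add: psi_add')
    moreover obtain d1 d2 d3 where d: "u - w = (d1, d2, d3)" by (cases "u - w")
    ultimately have "d1 = 0 \<and> d2 = 0 \<and> d3 = 0" using z3 by simp
    then have "u - w = 0" using d by (simp add: zero_prod_def)
    then show "u = w" by simp
  qed
  have surj_psi: "\<exists>u. x = psi u" for x
  proof -
    have "x \<in> V.span {e, s, t}" using sp by auto
    then obtain k1 where "x - sc k1 e \<in> V.span {s, t}" by (auto simp: V.span_insert)
    then obtain k2 where "x - sc k1 e - sc k2 s \<in> V.span {t}" by (auto simp: V.span_insert)
    then obtain k3 where "x - sc k1 e - sc k2 s = sc k3 t" by (auto simp: V.span_singleton)
    then have "x = psi (k1, k2, k3)" by (simp add: psi_simp algebra_simps)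
    then show ?thesis by blast
  qed
  have bij_psi: "bij psi" using inj_psi surj_psi by (metis bijI surjI)
  have psi_iv: "iv (psi u) = psi (invS u)" for u
    by (cases u) (simp add: psi_simp invS_def ivadd ivscale ive ivs ivt V.scale_minus_left V.scale_minus_right)
  have psi_inj_eq: "psi u = psi w \<longleftrightarrow> u = w" for u w using inj_psi by (auto dest: injD)
  obtain a1 a2 a3 where ss0: "m s s = psi (a1, a2, a3)" using surj_psi by (metis prod_cases3)
  have "iv (m s s) = m s s" by (simp add: ivm ivs mneg1 mneg2)
  then have "psi (invS (a1, a2, a3)) = psi (a1, a2, a3)" by (simp add: ss0 psi_iv)
  then have "a2 = 0 \<and> a3 = 0" by (simp add: psi_inj_eq invS_def)
  then have ss: "m s s = psi (a1, 0, 0)" using ss0 by simp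
  obtain c1 c2 c3 where tt0: "m t t = psi (c1, c2, c3)" using surj_psi by (metis prod_cases3)
  have "iv (m t t) = m t t" by (simp add: ivm ivt mneg1 mneg2)
  then have "psi (invS (c1, c2, c3)) = psi (c1, c2, c3)" by (simp add: tt0 psi_iv)
  then have "c2 = 0 \<and> c3 = 0" by (simp add: psi_inj_eq invS_def)
  then have tt: "m t t = psi (c1, 0, 0)" using tt0 by simp
  obtain b p q where st: "m s t = psi (b, p, q)" using surj_psi by (metis prod_cases3)
  have "m t s = iv (m s t)" by (simp add: ivm ivs ivt mneg1 mneg2)
  then have ts: "m t s = psi (b, - p, - q)" by (simp add: st psi_iv invS_def)
  have pe: "e = psi (1, 0, 0)" and ps: "s = psi (0, 1, 0)" and pt: "t = psi (0, 0, 1)"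
    by (simp_all add: psi_simp)
  have left: "m (psi (x1, x2, x3)) w = sc x1 (m e w) + sc x2 (m s w) + sc x3 (m t w)" for x1 x2 x3 w
    by (simp add: psi_simp madd1 mscale1)
  have right: "m w (psi (y1, y2, y3)) = sc y1 (m w e) + sc y2 (m w s) + sc y3 (m w t)" for y1 y2 y3 w
    by (simp add: psi_simp madd2 mscale2)
  have key: "m (psi x) (psi y) = psi (multG a1 b c1 p q x y)" for x y
  proof -
    obtain x1 x2 x3 where x: "x = (x1, x2, x3)" by (cases x)
    obtain y1 y2 y3 where y: "y = (y1, y2, y3)" by (cases y)
    have Rs: "m (psi x) s = psi (sc3 x1 (0,1,0) + sc3 x2 (a1,0,0) + sc3 x3 (b,-p,-q))"
    proof -
      have "m (psi x) s = sc x1 (psi (0,1,0)) + sc x2 (psi (a1,0,0)) + sc x3 (psi (b,-p,-q))"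
        unfolding x left by (simp add: e ss ts flip: ps)
      also have "\<dots> = psi (sc3 x1 (0,1,0) + sc3 x2 (a1,0,0) + sc3 x3 (b,-p,-q))"
        by (simp only: psi_add psi_scale)
      finally show ?thesis .
    qed
    have Rt: "m (psi x) t = psi (sc3 x1 (0,0,1) + sc3 x2 (b,p,q) + sc3 x3 (c1,0,0))"
    proof -
      have "m (psi x) t = sc x1 (psi (0,0,1)) + sc x2 (psi (b,p,q)) + sc x3 (psi (c1,0,0))"
        unfolding x left by (simp add: e st tt flip: pt)
      also have "\<dots> = psi (sc3 x1 (0,0,1) + sc3 x2 (b,p,q) + sc3 x3 (c1,0,0))"
        by (simp only: psi_add psi_scale)
      finally show ?thesis .
    qed
    have "m (psi x) (psi y) = sc y1 (psi x) + sc y2 (m (psi x) s) + sc y3 (m (psi x) t)"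
      unfolding y right by (simp add: e)
    also have "\<dots> = psi (sc3 y1 x + sc3 y2 (sc3 x1 (0,1,0) + sc3 x2 (a1,0,0) + sc3 x3 (b,-p,-q))
        + sc3 y3 (sc3 x1 (0,0,1) + sc3 x2 (b,p,q) + sc3 x3 (c1,0,0)))"
      unfolding Rs Rt by (simp only: psi_add psi_scale)
    also have "\<dots> = psi (multG a1 b c1 p q x y)"
      unfolding x y by (simp add: sc3_def multG_def algebra_simps)
    finally show ?thesis .
  qed
  define \<phi> where "\<phi> = inv psi"
  have phipsi: "\<phi> (psi u) = u" for u unfolding \<phi>_def using inj_psi by simp
  have "iso_inv_alg sc m iv sc3 (multG a1 b c1 p q) invS \<phi>"
    unfolding iso_inv_alg_def
  proof (intro conjI allI)
    show "Vector_Spaces.linear sc sc3 \<phi>"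
      unfolding Vector_Spaces.linear_iff
    proof (intro conjI allI)
      show "vector_space sc" by unfold_locales
      show "vector_space sc3" by (rule vs3)
      fix x y :: 'a and k :: complex
      obtain u w where "x = psi u" "y = psi w" using surj_psi by blast
      then show "\<phi> (x + y) = \<phi> x + \<phi> y" "\<phi> (sc k x) = sc3 k (\<phi> x)"
        by (simp_all add: phipsi flip: psi_add psi_scale)
    qed
    show "bij \<phi>" unfolding \<phi>_def by (rule bij_imp_bij_inv[OF bij_psi])
    fix x y :: 'a
    obtain u w where "x = psi u" "y = psi w" using surj_psi by blast
    then show "\<phi> (m x y) = multG a1 b c1 p q (\<phi> x) (\<phi> y)" "\<phi> (iv x) = invS (\<phi> x)"
      by (simp_all add: phipsi key psi_iv)
  qed
  then show ?thesis by blast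
qed
theorem mainTheorem2:
  fixes sc :: "complex \<Rightarrow> 'a::ab_group_add \<Rightarrow> 'a"
    and m :: "'a \<Rightarrow> 'a \<Rightarrow> 'a"
    and iv :: "'a \<Rightarrow> 'a"
  assumes "structurable sc m iv"
    and "of_type sc iv 1 2"
  shows "(\<exists>\<phi>. iso_inv_alg sc m iv sc3 multS1 invS \<phi>) \<or>
         (\<exists>\<phi>. iso_inv_alg sc m iv sc3 multS2 invS \<phi>)"
proof -
  have ca: "complex_algebra sc m" and inv: "is_involution sc m iv" and un: "is_unital m"
    and idm: "\<forall>x y z w. Top m iv z (Vop m iv x y w) - Vop m iv x y (Top m iv z w)
        = Vop m iv (Top m iv z x) y w - Vop m iv x (Top m iv (iv z) y) w"
    using assms(1) unfolding structurable_def by auto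
  obtain a b c p q \<phi> where iso: "iso_inv_alg sc m iv sc3 (multG a b c p q) invS \<phi>"
    using lemA[OF ca inv un assms(2)] by blast
  have "a = q^2 \<and> c = p^2 \<and> b = - p * q"
    by (rule lemD) (rule transport[OF iso idm])
  then have iso': "iso_inv_alg sc m iv sc3 (multG (q^2) (- p * q) (p^2) p q) invS \<phi>"
    using iso by simp
  show ?thesis
  proof (cases "p = 0 \<and> q = 0")
    case True
    then have "iso_inv_alg sc m iv sc3 (multG 0 0 0 0 0) invS \<phi>" using iso' by simp
    from iso_comp[OF this lemE1] show ?thesis by blast
  next
    case False
    then obtain \<alpha> \<beta> where ab: "p * \<beta> - q * \<alpha> = 1"
    proof (cases "p = 0")
      case True
      then have "q \<noteq> 0" using False by simp
      then have "p * 0 - q * (- 1 / q) = 1" by simp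
      then show ?thesis using that by blast
    next
      case pn: False
      then have "p * (1 / p) - q * 0 = 1" by simp
      then show ?thesis using that by blast
    qed
    from iso_comp[OF iso' lemE2[OF ab]] show ?thesis by blast
  qed
qed

end
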